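(* Let $P:\mathcal C^{op}\to\mathbf{Pos}$ be a doctrine and $\mathsf K=(K,\kappa,\mu,\nu)$ a comonad on $P$ in $\mathbf{IdxPos}$. Let $\mathcal C_K$ be the category of coalgebras for the comonad $(K,\mu,\nu)$ on $\mathcal C$ and $U:\mathcal C_K\to\mathcal C$ the forgetful functor. Then the natural transformation $\square^{\mathsf K}:P\circ U^{op}\Rightarrow P\circ U^{op}$ defined, for each coalgebra $(X,c)$, by $\square^{\mathsf K}_{(X,c)}=P(c)\circ\kappa_X:PX\to PX$, is an interior operator on the doctrine $P\circ U^{op}:\mathcal C_K^{op}\to\mathbf{Pos}$.
   Context: A doctrine is a functor $P:\mathcal C^{op}\to\mathbf{Pos}$; for $t:X\to Y$, $P(t):PY\to PX$ is reindexing. A comonad on $P$ in the 2-category $\mathbf{IdxPos}$ of doctrines amounts to a quadruple $(K,\kappa,\mu,\nu)$ where $(K,\mu,\nu)$ is a comonad on $\mathcal C$, $\kappa:P\Rightarrow P\circ K^{op}$ is a natural transformation (components $\kappa_X:PX\to P(KX)$), and for all $X$, $\kappa_X\le P(\mu_X)\circ\kappa_{KX}\circ\kappa_X$ and $\kappa_X\le P(\nu_X)$ pointwise. A coalgebra is $(X,c)$ with $c:X\to KX$, $\nu_X c=\mathrm{id}_X$, $\mu_X c=Kc\circ c$; morphisms $t:(X,c)\to(X',c')$ satisfy $c't=Kt\circ c$. An interior operator on a doctrine $M:\mathcal B^{op}\to\mathbf{Pos}$ is a natural transformation $\square:M\Rightarrow M$ with $\square_B(\alpha)\le\alpha$ and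 $\square_B(\alpha)\le\square_B(\square_B\alpha)$ for all $B$ and $\alpha\in MB$. *)

theory Defs
  imports Main
begin

record ('o,'m) cat =
  Ob  :: "'o set"
  Ar  :: "'m set"
  Dom :: "'m \<Rightarrow> 'o"
  Cod :: "'m \<Rightarrow> 'o"
  Cmp :: "'m \<Rightarrow> 'm \<Rightarrow> 'm"   (* Cmp C g f = g \<circ> f *)
  Idm :: "'o \<Rightarrow> 'm"

definition category :: "('o,'m) cat \<Rightarrow> bool" where
  "category C \<longleftrightarrow>
     (\<forall>f\<in>Ar C. Dom C f \<in> Ob C \<and> Cod C f \<in> Ob C) \<and>
     (\<forall>X\<in>Ob C. Idm C X \<in> Ar C \<and> Dom C (Idm C X) = X \<and> Cod C (Idm C X) = X) \<and>
     (\<forall>f\<in>Ar C. \<forall>g\<in>Ar C. Cod C f = Dom C g \<longrightarrow>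
        Cmp C g f \<in> Ar C \<and> Dom C (Cmp C g f) = Dom C f \<and> Cod C (Cmp C g f) = Cod C g) \<and>
     (\<forall>f\<in>Ar C. Cmp C f (Idm C (Dom C f)) = f \<and> Cmp C (Idm C (Cod C f)) f = f) \<and>
     (\<forall>f\<in>Ar C. \<forall>g\<in>Ar C. \<forall>h\<in>Ar C. Cod C f = Dom C g \<longrightarrow> Cod C g = Dom C h \<longrightarrow>
        Cmp C h (Cmp C g f) = Cmp C (Cmp C h g) f)"

definition endofunctor :: "('o,'m) cat \<Rightarrow> ('o \<Rightarrow> 'o) \<Rightarrow> ('m \<Rightarrow> 'm) \<Rightarrow> bool" where
  "endofunctor C Fo Fa \<longleftrightarrow>
     (\<forall>X\<in>Ob C. Fo X \<in> Ob C \<and> Fa (Idm C X) = Idm C (Fo X)) \<and>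
     (\<forall>f\<in>Ar C. Fa f \<in> Ar C \<and> Dom C (Fa f) = Fo (Dom C f) \<and> Cod C (Fa f) = Fo (Cod C f)) \<and>
     (\<forall>f\<in>Ar C. \<forall>g\<in>Ar C. Cod C f = Dom C g \<longrightarrow> Fa (Cmp C g f) = Cmp C (Fa g) (Fa f))"

definition nat_trans :: "('o,'m) cat \<Rightarrow> ('o \<Rightarrow> 'o) \<Rightarrow> ('m \<Rightarrow> 'm) \<Rightarrow> ('o \<Rightarrow> 'o) \<Rightarrow> ('m \<Rightarrow> 'm)
    \<Rightarrow> ('o \<Rightarrow> 'm) \<Rightarrow> bool" where
  "nat_trans C Fo Fa Go Ga \<eta> \<longleftrightarrow>
     (\<forall>X\<in>Ob C. \<eta> X \<in> Ar C \<and> Dom C (\<eta> X) = Fo X \<and> Cod C (\<eta> X) = Go X) \<and>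
     (\<forall>f\<in>Ar C. Cmp C (\<eta> (Cod C f)) (Fa f) = Cmp C (Ga f) (\<eta> (Dom C f)))"

definition comonad :: "('o,'m) cat \<Rightarrow> ('o \<Rightarrow> 'o) \<Rightarrow> ('m \<Rightarrow> 'm) \<Rightarrow> ('o \<Rightarrow> 'm) \<Rightarrow> ('o \<Rightarrow> 'm) \<Rightarrow> bool" where
  "comonad C Ko Ka \<mu> \<nu> \<longleftrightarrow>
     category C \<and> endofunctor C Ko Ka \<and>
     nat_trans C Ko Ka (Ko \<circ> Ko) (Ka \<circ> Ka) \<mu> \<and>
     nat_trans C Ko Ka id id \<nu> \<and>
     (\<forall>X\<in>Ob C. Cmp C (\<nu> (Ko X)) (\<mu> X) = Idm C (Ko X) \<and>
                Cmp C (Ka (\<nu> X)) (\<mu> X) = Idm C (Ko X) \<and>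
                Cmp C (\<mu> (Ko X)) (\<mu> X) = Cmp C (Ka (\<mu> X)) (\<mu> X))"

definition doctrine :: "('o,'m) cat \<Rightarrow> ('o \<Rightarrow> 'p set) \<Rightarrow> ('o \<Rightarrow> 'p \<Rightarrow> 'p \<Rightarrow> bool)
    \<Rightarrow> ('m \<Rightarrow> 'p \<Rightarrow> 'p) \<Rightarrow> bool" where
  "doctrine C PC le rx \<longleftrightarrow>
     (\<forall>X\<in>Ob C. (\<forall>a\<in>PC X. le X a a) \<and>
                (\<forall>a\<in>PC X. \<forall>b\<in>PC X. le X a b \<longrightarrow> le X b a \<longrightarrow> a = b) \<and>
                (\<forall>a\<in>PC X. \<forall>b\<in>PC X. \<forall>c\<in>PC X. le X a b \<longrightarrow> le X b c \<longrightarrow> le X a c)) \<and>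
     (\<forall>t\<in>Ar C. (\<forall>a\<in>PC (Cod C t). rx t a \<in> PC (Dom C t)) \<and>
                (\<forall>a\<in>PC (Cod C t). \<forall>b\<in>PC (Cod C t). le (Cod C t) a b \<longrightarrow> le (Dom C t) (rx t a) (rx t b))) \<and>
     (\<forall>X\<in>Ob C. \<forall>a\<in>PC X. rx (Idm C X) a = a) \<and>
     (\<forall>f\<in>Ar C. \<forall>g\<in>Ar C. Cod C f = Dom C g \<longrightarrow>
        (\<forall>a\<in>PC (Cod C g). rx (Cmp C g f) a = rx f (rx g a)))"

definition doctrine_comonad :: "('o,'m) cat \<Rightarrow> ('o \<Rightarrow> 'p set) \<Rightarrow> ('o \<Rightarrow> 'p \<Rightarrow> 'p \<Rightarrow> bool)
    \<Rightarrow> ('m \<Rightarrow> 'p \<Rightarrow> 'p) \<Rightarrow> ('o \<Rightarrow> 'o) \<Rightarrow> ('m \<Rightarrow> 'm) \<Rightarrow> ('o \<Rightarrow> 'p \<Rightarrow> 'p)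
    \<Rightarrow> ('o \<Rightarrow> 'm) \<Rightarrow> ('o \<Rightarrow> 'm) \<Rightarrow> bool" where
  "doctrine_comonad C PC le rx Ko Ka \<kappa> \<mu> \<nu> \<longleftrightarrow>
     comonad C Ko Ka \<mu> \<nu> \<and>
     (\<forall>X\<in>Ob C. (\<forall>a\<in>PC X. \<kappa> X a \<in> PC (Ko X)) \<and>
                (\<forall>a\<in>PC X. \<forall>b\<in>PC X. le X a b \<longrightarrow> le (Ko X) (\<kappa> X a) (\<kappa> X b))) \<and>
     (\<forall>t\<in>Ar C. \<forall>a\<in>PC (Cod C t). \<kappa> (Dom C t) (rx t a) = rx (Ka t) (\<kappa> (Cod C t) a)) \<and>
     (\<forall>X\<in>Ob C. \<forall>a\<in>PC X.
        le (Ko X) (\<kappa> X a) (rx (\<mu> X) (\<kappa> (Ko X) (\<kappa> X a))) \<and>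
        le (Ko X) (\<kappa> X a) (rx (\<nu> X) a))"

definition coalgebra :: "('o,'m) cat \<Rightarrow> ('o \<Rightarrow> 'o) \<Rightarrow> ('m \<Rightarrow> 'm) \<Rightarrow> ('o \<Rightarrow> 'm) \<Rightarrow> ('o \<Rightarrow> 'm)
    \<Rightarrow> 'o \<times> 'm \<Rightarrow> bool" where
  "coalgebra C Ko Ka \<mu> \<nu> Xc \<longleftrightarrow>
     (case Xc of (X, c) \<Rightarrow> X \<in> Ob C \<and> c \<in> Ar C \<and> Dom C c = X \<and> Cod C c = Ko X \<and>
        Cmp C (\<nu> X) c = Idm C X \<and> Cmp C (\<mu> X) c = Cmp C (Ka c) c)"

definition coalg_cat :: "('o,'m) cat \<Rightarrow> ('o \<Rightarrow> 'o) \<Rightarrow> ('m \<Rightarrow> 'm) \<Rightarrow> ('o \<Rightarrow> 'm) \<Rightarrow> ('o \<Rightarrow> 'm)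
    \<Rightarrow> ('o \<times> 'm, ('o \<times> 'm) \<times> 'm \<times> ('o \<times> 'm)) cat" where
  "coalg_cat C Ko Ka \<mu> \<nu> =
     \<lparr> Ob = {Xc. coalgebra C Ko Ka \<mu> \<nu> Xc},
       Ar = {((X, c), t, (X', c')). coalgebra C Ko Ka \<mu> \<nu> (X, c) \<and> coalgebra C Ko Ka \<mu> \<nu> (X', c') \<and>
               t \<in> Ar C \<and> Dom C t = X \<and> Cod C t = X' \<and> Cmp C c' t = Cmp C (Ka t) c},
       Dom = fst,
       Cod = (\<lambda>a. snd (snd a)),
       Cmp = (\<lambda>g f. (fst f, Cmp C (fst (snd g)) (fst (snd f)), snd (snd g))),
       Idm = (\<lambda>Xc. (Xc, Idm C (fst Xc), Xc)) \<rparr>"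

definition U_ob :: "'o \<times> 'm \<Rightarrow> 'o" where "U_ob Xc = fst Xc"
definition U_ar :: "('o \<times> 'm) \<times> 'm \<times> ('o \<times> 'm) \<Rightarrow> 'm" where "U_ar a = fst (snd a)"

definition interior_operator :: "('b,'n) cat \<Rightarrow> ('b \<Rightarrow> 'p set) \<Rightarrow> ('b \<Rightarrow> 'p \<Rightarrow> 'p \<Rightarrow> bool)
    \<Rightarrow> ('n \<Rightarrow> 'p \<Rightarrow> 'p) \<Rightarrow> ('b \<Rightarrow> 'p \<Rightarrow> 'p) \<Rightarrow> bool" where
  "interior_operator B MC le rx box \<longleftrightarrow>
     (\<forall>X\<in>Ob B. (\<forall>a\<in>MC X. box X a \<in> MC X) \<and>
                (\<forall>a\<in>MC X. \<forall>b\<in>MC X. le X a b \<longrightarrow> le X (box X a) (box X b))) \<and>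
     (\<forall>t\<in>Ar B. \<forall>a\<in>MC (Cod B t). box (Dom B t) (rx t a) = rx t (box (Cod B t) a)) \<and>
     (\<forall>X\<in>Ob B. \<forall>a\<in>MC X. le X (box X a) a \<and> le X (box X a) (box X (box X a)))"

end

theory Submission
  imports Defs
begin

theorem proposition6p6:
  fixes C :: "('o,'m) cat"
    and PC :: "'o \<Rightarrow> 'p set" and le :: "'o \<Rightarrow> 'p \<Rightarrow> 'p \<Rightarrow> bool" and rx :: "'m \<Rightarrow> 'p \<Rightarrow> 'p"
    and Ko :: "'o \<Rightarrow> 'o" and Ka :: "'m \<Rightarrow> 'm" and \<kappa> :: "'o \<Rightarrow> 'p \<Rightarrow> 'p"
    and \<mu> :: "'o \<Rightarrow> 'm" and \<nu> :: "'o \<Rightarrow> 'm"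
  assumes "category C"
    and "doctrine C PC le rx"
    and "doctrine_comonad C PC le rx Ko Ka \<kappa> \<mu> \<nu>"
  shows "interior_operator (coalg_cat C Ko Ka \<mu> \<nu>)
           (\<lambda>Xc. PC (U_ob Xc)) (\<lambda>Xc. le (U_ob Xc)) (\<lambda>a. rx (U_ar a))
           (\<lambda>Xc. rx (snd Xc) \<circ> \<kappa> (fst Xc))"
proof -
  note D = assms(2)[unfolded doctrine_def]
  note K = assms(3)[unfolded doctrine_comonad_def]
  note CM = K[THEN conjunct1, unfolded comonad_def]
  note EF = CM[THEN conjunct2, THEN conjunct1, unfolded endofunctor_def]
  note MU = CM[THEN conjunct2, THEN conjunct2, THEN conjunct1, unfolded nat_trans_def]
  note NU = CM[THEN conjunct2, THEN conjunct2, THEN conjunct2, THEN conjunct1, unfolded nat_trans_def]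
  note CAT = assms(1)[unfolded category_def]
  have refl: "\<And>X a. X \<in> Ob C \<Longrightarrow> a \<in> PC X \<Longrightarrow> le X a a" using D[THEN conjunct1] by blast
  have trans: "\<And>X a b c. X \<in> Ob C \<Longrightarrow> a \<in> PC X \<Longrightarrow> b \<in> PC X \<Longrightarrow> c \<in> PC X \<Longrightarrow> le X a b \<Longrightarrow> le X b c \<Longrightarrow> le X a c"
    using D[THEN conjunct1] by blast
  have rxin: "\<And>t a. t \<in> Ar C \<Longrightarrow> a \<in> PC (Cod C t) \<Longrightarrow> rx t a \<in> PC (Dom C t)" using D[THEN conjunct2, THEN conjunct1] by blast
  have rxmono: "\<And>t a b. t \<in> Ar C \<Longrightarrow> a \<in> PC (Cod C t) \<Longrightarrow> b \<in> PC (Cod C t) \<Longrightarrow> le (Cod C t) a b \<Longrightarrow> le (Dom C t) (rx t a) (rx t b)"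
    using D[THEN conjunct2, THEN conjunct1] by blast
  have rxid: "\<And>X a. X \<in> Ob C \<Longrightarrow> a \<in> PC X \<Longrightarrow> rx (Idm C X) a = a" using D[THEN conjunct2, THEN conjunct2, THEN conjunct1] by blast
  have rxcmp: "\<And>f g a. f \<in> Ar C \<Longrightarrow> g \<in> Ar C \<Longrightarrow> Cod C f = Dom C g \<Longrightarrow> a \<in> PC (Cod C g) \<Longrightarrow> rx (Cmp C g f) a = rx f (rx g a)"
    using D[THEN conjunct2, THEN conjunct2, THEN conjunct2] by blast
  have kin: "\<And>X a. X \<in> Ob C \<Longrightarrow> a \<in> PC X \<Longrightarrow> \<kappa> X a \<in> PC (Ko X)" using K[THEN conjunct2, THEN conjunct1] by blast
  have kmono: "\<And>X a b. X \<in> Ob C \<Longrightarrow> a \<in> PC X \<Longrightarrow> b \<in> PC X \<Longrightarrow> le X a b \<Longrightarrow> le (Ko X) (\<kappa> X a) (\<kappa> X b)" using K[THEN conjunct2, THEN conjunct1] by blast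
  have knat: "\<And>t a. t \<in> Ar C \<Longrightarrow> a \<in> PC (Cod C t) \<Longrightarrow> \<kappa> (Dom C t) (rx t a) = rx (Ka t) (\<kappa> (Cod C t) a)" using K[THEN conjunct2, THEN conjunct2, THEN conjunct1] by blast
  have kmu: "\<And>X a. X \<in> Ob C \<Longrightarrow> a \<in> PC X \<Longrightarrow> le (Ko X) (\<kappa> X a) (rx (\<mu> X) (\<kappa> (Ko X) (\<kappa> X a)))" using K[THEN conjunct2, THEN conjunct2, THEN conjunct2] by blast
  have knu: "\<And>X a. X \<in> Ob C \<Longrightarrow> a \<in> PC X \<Longrightarrow> le (Ko X) (\<kappa> X a) (rx (\<nu> X) a)" using K[THEN conjunct2, THEN conjunct2, THEN conjunct2] by blast
  have Kob: "\<And>X. X \<in> Ob C \<Longrightarrow> Ko X \<in> Ob C" using EF[THEN conjunct1] by blast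
  have Kar: "\<And>f. f \<in> Ar C \<Longrightarrow> Ka f \<in> Ar C \<and> Dom C (Ka f) = Ko (Dom C f) \<and> Cod C (Ka f) = Ko (Cod C f)" using EF[THEN conjunct2, THEN conjunct1] by blast
  have muar: "\<And>X. X \<in> Ob C \<Longrightarrow> \<mu> X \<in> Ar C \<and> Dom C (\<mu> X) = Ko X \<and> Cod C (\<mu> X) = Ko (Ko X)" using MU[THEN conjunct1] by auto
  have nuar: "\<And>X. X \<in> Ob C \<Longrightarrow> \<nu> X \<in> Ar C \<and> Dom C (\<nu> X) = Ko X \<and> Cod C (\<nu> X) = X" using NU[THEN conjunct1] by auto
  have cmpar: "\<And>f g. f \<in> Ar C \<Longrightarrow> g \<in> Ar C \<Longrightarrow> Cod C f = Dom C g \<Longrightarrow> Cmp C g f \<in> Ar C \<and> Dom C (Cmp C g f) = Dom C f \<and> Cod C (Cmp C g f) = Cod C g"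
    using CAT[THEN conjunct2, THEN conjunct2, THEN conjunct1] by blast
  have box_in: "rx c (\<kappa> X a) \<in> PC X" if co: "coalgebra C Ko Ka \<mu> \<nu> (X, c)" and a: "a \<in> PC X" for X c a
  proof -
    from co have X: "X \<in> Ob C" "c \<in> Ar C" "Dom C c = X" "Cod C c = Ko X" by (auto simp: coalgebra_def)
    show ?thesis using rxin[of c "\<kappa> X a"] kin[OF X(1) a] X by simp
  qed
  show ?thesis
    unfolding interior_operator_def
  proof (intro conjI ballI impI)
    fix Xc a assume Xc: "Xc \<in> Ob (coalg_cat C Ko Ka \<mu> \<nu>)" and a: "a \<in> PC (U_ob Xc)"
    obtain X c where e: "Xc = (X, c)" by (cases Xc)
    have co: "coalgebra C Ko Ka \<mu> \<nu> (X, c)" using Xc e by (simp add: coalg_cat_def)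
    then have X: "X \<in> Ob C" "c \<in> Ar C" "Dom C c = X" "Cod C c = Ko X"
      and cnu: "Cmp C (\<nu> X) c = Idm C X" and cmu: "Cmp C (\<mu> X) c = Cmp C (Ka c) c"
      by (auto simp: coalgebra_def)
    have a': "a \<in> PC X" using a e by (simp add: U_ob_def)
    show "(rx (snd Xc) \<circ> \<kappa> (fst Xc)) a \<in> PC (U_ob Xc)" using box_in[OF co a'] e by (simp add: U_ob_def)
    {
      have "le X (rx c (\<kappa> X a)) (rx c (rx (\<nu> X) a))"
        using rxmono[of c "\<kappa> X a" "rx (\<nu> X) a"] X kin[OF X(1) a'] knu[OF X(1) a'] rxin[of "\<nu> X" a] nuar[OF X(1)] a' by simp
      moreover have "rx c (rx (\<nu> X) a) = a"
        using rxcmp[of c "\<nu> X" a] X nuar[OF X(1)] a' cnu rxid[OF X(1) a'] by simp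
      ultimately show "le (U_ob Xc) ((rx (snd Xc) \<circ> \<kappa> (fst Xc)) a) a" using e by (simp add: U_ob_def)
    }
    {
      let ?b = "\<kappa> X a"
      have b: "?b \<in> PC (Ko X)" using kin[OF X(1) a'] .
      have kb: "\<kappa> (Ko X) ?b \<in> PC (Ko (Ko X))" using kin[OF Kob[OF X(1)] b] .
      have "le X (rx c ?b) (rx c (rx (\<mu> X) (\<kappa> (Ko X) ?b)))"
        using rxmono[of c ?b "rx (\<mu> X) (\<kappa> (Ko X) ?b)"] X b kmu[OF X(1) a'] rxin[of "\<mu> X"] muar[OF X(1)] kb by simp
      moreover have "rx c (rx (\<mu> X) (\<kappa> (Ko X) ?b)) = rx (Cmp C (Ka c) c) (\<kappa> (Ko X) ?b)"
        using rxcmp[of c "\<mu> X"] X muar[OF X(1)] kb cmu by simp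
      moreover have "\<dots> = rx c (rx (Ka c) (\<kappa> (Ko X) ?b))"
        using rxcmp[of c "Ka c"] X Kar[OF X(2)] kb by simp
      moreover have "rx (Ka c) (\<kappa> (Ko X) ?b) = \<kappa> X (rx c ?b)"
        using knat[of c ?b] X b by simp
      ultimately show "le (U_ob Xc) ((rx (snd Xc) \<circ> \<kappa> (fst Xc)) a)
          ((rx (snd Xc) \<circ> \<kappa> (fst Xc)) ((rx (snd Xc) \<circ> \<kappa> (fst Xc)) a))" using e by (simp add: U_ob_def)
    }
  next
    fix Xc a b assume Xc: "Xc \<in> Ob (coalg_cat C Ko Ka \<mu> \<nu>)" and a: "a \<in> PC (U_ob Xc)"
      and b: "b \<in> PC (U_ob Xc)" and ab: "le (U_ob Xc) a b"
    obtain X c where e: "Xc = (X, c)" by (cases Xc)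
    have co: "coalgebra C Ko Ka \<mu> \<nu> (X, c)" using Xc e by (simp add: coalg_cat_def)
    then have X: "X \<in> Ob C" "c \<in> Ar C" "Dom C c = X" "Cod C c = Ko X" by (auto simp: coalgebra_def)
    have a': "a \<in> PC X" "b \<in> PC X" "le X a b" using a b ab e by (auto simp: U_ob_def)
    show "le (U_ob Xc) ((rx (snd Xc) \<circ> \<kappa> (fst Xc)) a) ((rx (snd Xc) \<circ> \<kappa> (fst Xc)) b)"
      using rxmono[of c "\<kappa> X a" "\<kappa> X b"] X kin[OF X(1) a'(1)] kin[OF X(1) a'(2)] kmono[OF X(1) a'] e
      by (simp add: U_ob_def)
  next
    fix t a assume t: "t \<in> Ar (coalg_cat C Ko Ka \<mu> \<nu>)" and a: "a \<in> PC (U_ob (Cod (coalg_cat C Ko Ka \<mu> \<nu>) t))"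
    obtain X c s X' c' where e: "t = ((X, c), s, (X', c'))" by (metis prod.exhaust)
    have H: "coalgebra C Ko Ka \<mu> \<nu> (X, c)" "coalgebra C Ko Ka \<mu> \<nu> (X', c')" "s \<in> Ar C" "Dom C s = X" "Cod C s = X'"
      "Cmp C c' s = Cmp C (Ka s) c" using t e by (auto simp: coalg_cat_def)
    have X: "X \<in> Ob C" "c \<in> Ar C" "Dom C c = X" "Cod C c = Ko X" using H(1) by (auto simp: coalgebra_def)
    have X': "X' \<in> Ob C" "c' \<in> Ar C" "Dom C c' = X'" "Cod C c' = Ko X'" using H(2) by (auto simp: coalgebra_def)
    have a': "a \<in> PC X'" using a e by (simp add: U_ob_def coalg_cat_def)
    have ka: "\<kappa> X' a \<in> PC (Ko X')" using kin[OF X'(1) a'] .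
    have "rx c (\<kappa> X (rx s a)) = rx c (rx (Ka s) (\<kappa> X' a))" using knat[of s a] H a' by simp
    also have "\<dots> = rx (Cmp C (Ka s) c) (\<kappa> X' a)" using rxcmp[of c "Ka s"] X Kar[OF H(3)] H ka by simp
    also have "\<dots> = rx (Cmp C c' s) (\<kappa> X' a)" using H by simp
    also have "\<dots> = rx s (rx c' (\<kappa> X' a))" using rxcmp[of s c'] H X' ka by simp
    finally show "(rx (snd (Dom (coalg_cat C Ko Ka \<mu> \<nu>) t)) \<circ> \<kappa> (fst (Dom (coalg_cat C Ko Ka \<mu> \<nu>) t))) (rx (U_ar t) a) =
       rx (U_ar t) ((rx (snd (Cod (coalg_cat C Ko Ka \<mu> \<nu>) t)) \<circ> \<kappa> (fst (Cod (coalg_cat C Ko Ka \<mu> \<nu>) t))) a)"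
      using e by (simp add: coalg_cat_def U_ar_def)
  qed
qed

end
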